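(* Let $f_1,f_2,f_3$ be smooth nowhere-vanishing functions on $\mathbb R^3$, $g=\frac{1}{f_1^2}dx^1\otimes dx^1+\frac{1}{f_2^2}dx^2\otimes dx^2+\frac{1}{f_3^2}dx^3\otimes dx^3$, $E_i=f_i\frac{\partial}{\partial x^i}$, and let $V_1=\sum_{i=1}^3V_1^iE_i$, $V_2=\sum_{i=1}^3V_2^iE_i$ with smooth components. (i) If $f_i$ and $V_k^i$ depend only on $x^1$ for all $i\in\{1,2,3\}$, $k\in\{1,2\}$, and $V_1,V_2$ are Killing vector fields, then $V_1^1=V_2^1+\tilde c_1$ and $V_1^i=V_2^i+\tilde c_i+\frac{c_i}{f_i}$ for $i\in\{2,3\}$, for some constants $c_2,c_3,\tilde c_1,\tilde c_2,\tilde c_3\in\mathbb R$. (ii) If $f_i$ and $V_k^i$ depend only on $x^i$ for all $i\in\{1,2,3\}$, $k\in\{1,2\}$, and $V_1,V_2$ are Killing vector fields, then $V_1^i=V_2^i+c_i$ for some constants $c_i\in\mathbb R$, $i\in\{1,2,3\}$.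
   Context: $x^1,x^2,x^3$ are the standard coordinates on $\mathbb R^3$. A vector field $V$ is Killing if $\mathcal L_Vg=0$. *)

theory Defs
  imports "HOL-Analysis.Analysis"
begin

text \<open>Functions on R^3 are modelled as real^3 => real; coordinate x^i is x $ i, i :: 3.\<close>

definition pd :: "3 \<Rightarrow> (real^3 \<Rightarrow> real) \<Rightarrow> real^3 \<Rightarrow> real" where
  "pd k F x = deriv (\<lambda>t. F (x + t *\<^sub>R axis k 1)) 0"

fun iter_pd :: "3 list \<Rightarrow> (real^3 \<Rightarrow> real) \<Rightarrow> real^3 \<Rightarrow> real" where
  "iter_pd [] F = F"
| "iter_pd (k # ks) F = pd k (iter_pd ks F)"

definition smooth3 :: "(real^3 \<Rightarrow> real) \<Rightarrow> bool" where
  "smooth3 F \<longleftrightarrow> (\<forall>ks. continuous_on UNIV (iter_pd ks F) \<and>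
      (\<forall>k x. (\<lambda>t. iter_pd ks F (x + t *\<^sub>R axis k 1)) differentiable (at 0)))"

text \<open>Lie derivative of a (0,2)-tensor with coordinate components g i j along the vector
  field with coordinate components W k (i.e. W = sum_k W^k d/dx^k), in coordinates.\<close>
definition lie_metric ::
  "(3 \<Rightarrow> 3 \<Rightarrow> real^3 \<Rightarrow> real) \<Rightarrow> (3 \<Rightarrow> real^3 \<Rightarrow> real) \<Rightarrow> 3 \<Rightarrow> 3 \<Rightarrow> real^3 \<Rightarrow> real" where
  "lie_metric g W i j x =
     (\<Sum>k\<in>UNIV. W k x * pd k (g i j) x)
   + (\<Sum>k\<in>UNIV. g k j x * pd i (W k) x)
   + (\<Sum>k\<in>UNIV. g i k x * pd j (W k) x)"

definition killing :: "(3 \<Rightarrow> 3 \<Rightarrow> real^3 \<Rightarrow> real) \<Rightarrow> (3 \<Rightarrow> real^3 \<Rightarrow> real) \<Rightarrow> bool" where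
  "killing g W \<longleftrightarrow> (\<forall>i j x. lie_metric g W i j x = 0)"

definition diag_metric :: "(3 \<Rightarrow> real^3 \<Rightarrow> real) \<Rightarrow> 3 \<Rightarrow> 3 \<Rightarrow> real^3 \<Rightarrow> real" where
  "diag_metric f i j x = (if i = j then 1 / (f i x)\<^sup>2 else 0)"

text \<open>Coordinate components of V = sum_i V^i E_i with E_i = f_i d/dx^i.\<close>
definition frame_field :: "(3 \<Rightarrow> real^3 \<Rightarrow> real) \<Rightarrow> (3 \<Rightarrow> real^3 \<Rightarrow> real) \<Rightarrow> 3 \<Rightarrow> real^3 \<Rightarrow> real" where
  "frame_field f V i x = V i x * f i x"

definition depends_only_on :: "3 \<Rightarrow> (real^3 \<Rightarrow> real) \<Rightarrow> bool" where
  "depends_only_on k F \<longleftrightarrow> (\<forall>x y. x $ k = y $ k \<longrightarrow> F x = F y)"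

end

theory Submission
  imports Defs
begin

lemma line_diff: "smooth3 F \<Longrightarrow> (\<lambda>t. F (x + t *\<^sub>R axis k 1)) differentiable (at 0)"
proof -
  assume "smooth3 F"
  then have "\<forall>k x. (\<lambda>t. iter_pd [] F (x + t *\<^sub>R axis k 1)) differentiable (at 0)"
    unfolding smooth3_def by blast
  then show ?thesis by simp
qed

lemma line_deriv: "(\<lambda>t. F (x + t *\<^sub>R axis k 1)) differentiable (at 0) \<Longrightarrow>
   ((\<lambda>t. F (x + t *\<^sub>R axis k 1)) has_real_derivative pd k F x) (at 0)"
  unfolding pd_def using DERIV_deriv_iff_real_differentiable by blast

lemma pd_other: assumes "depends_only_on k F" "j \<noteq> k" shows "pd j F x = 0"
proof -
  have "(\<lambda>t. F (x + t *\<^sub>R axis j 1)) = (\<lambda>t. F x)"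
  proof (rule ext)
    fix t
    have "(x + t *\<^sub>R axis j 1) $ k = x $ k" using assms(2) by (simp add: axis_def)
    then show "F (x + t *\<^sub>R axis j 1) = F x"
      using assms(1) unfolding depends_only_on_def by blast
  qed
  then show ?thesis unfolding pd_def by simp
qed

lemma pd_mult: assumes "smooth3 F" "smooth3 G"
  shows "pd k (\<lambda>y. F y * G y) x = pd k F x * G x + F x * pd k G x"
proof -
  have "((\<lambda>t. F (x + t *\<^sub>R axis k 1) * G (x + t *\<^sub>R axis k 1)) has_real_derivative
     (pd k F x * G x + F x * pd k G x)) (at 0)"
    using DERIV_mult[OF line_deriv[OF line_diff[OF assms(1)]] line_deriv[OF line_diff[OF assms(2)]]]
    by (simp add: mult.commute)
  then show ?thesis unfolding pd_def by (rule DERIV_imp_deriv)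
qed

lemma pd_invsq: assumes "smooth3 F" "\<And>y. F y \<noteq> 0"
  shows "pd k (\<lambda>y. 1 / (F y)^2) x = - 2 * pd k F x / (F x)^3"
proof -
  have d: "((\<lambda>t. F (x + t *\<^sub>R axis k 1)) has_real_derivative pd k F x) (at 0)"
    using line_deriv[OF line_diff[OF assms(1)]] .
  have "((\<lambda>t. 1 / (F (x + t *\<^sub>R axis k 1))^2) has_real_derivative
     (- 2 * pd k F x / (F x)^3)) (at 0)"
  proof -
    have d2: "((\<lambda>t. (F (x + t *\<^sub>R axis k 1))^2) has_real_derivative (real 2 * pd k F x * (F x)^(2-1))) (at 0)"
      using DERIV_power[OF d, of 2] by (simp add: mult.assoc)
    have "((\<lambda>t. inverse ((F (x + t *\<^sub>R axis k 1))^2)) has_real_derivative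
        (- ((real 2 * pd k F x * (F x)^(2-1)) * inverse (((F x)^2)^Suc (Suc 0))))) (at 0)"
      using DERIV_inverse_fun[OF d2] assms(2)[of x] by simp
    moreover have "- ((real 2 * pd k F x * (F x)^(2-1)) * inverse (((F x)^2)^Suc (Suc 0))) = - 2 * pd k F x / (F x)^3"
      using assms(2)[of x] by (simp add: field_simps power2_eq_square power3_eq_cube)
    ultimately show ?thesis by (simp add: inverse_eq_divide)
  qed
  then show ?thesis unfolding pd_def by (rule DERIV_imp_deriv)
qed

lemma const_zero:
  assumes dep: "depends_only_on k F"
    and dif: "\<And>y. (\<lambda>t. F (y + t *\<^sub>R axis k 1)) differentiable (at 0)"
    and z: "\<And>y. pd k F y = 0"
  shows "F x = F y"
proof -
  define g where "g = (\<lambda>t. F (x + t *\<^sub>R axis k 1))"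
  have "DERIV g s :> 0" for s
  proof -
    have h: "((\<lambda>u. F ((x + s *\<^sub>R axis k 1) + u *\<^sub>R axis k 1)) has_real_derivative 0) (at (s + (-s)))"
      using line_deriv[OF dif] z by simp
    have e: "(\<lambda>t. F ((x + s *\<^sub>R axis k 1) + (t + - s) *\<^sub>R axis k 1)) = g"
      unfolding g_def by (rule ext) (simp add: algebra_simps)
    show ?thesis using h unfolding DERIV_shift e .
  qed
  then have "g 0 = g (y $ k - x $ k)" by (metis DERIV_isconst_all)
  moreover have "F y = g (y $ k - x $ k)"
  proof -
    have "(x + (y $ k - x $ k) *\<^sub>R axis k 1) $ k = y $ k" by (simp add: axis_def)
    then show ?thesis using dep unfolding g_def depends_only_on_def by metis
  qed
  ultimately show ?thesis unfolding g_def by simp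
qed


lemma sum_single: "(\<And>k. k \<noteq> i \<Longrightarrow> h k = 0) \<Longrightarrow> sum h (UNIV::3 set) = (h i :: real)"
proof -
  assume a: "\<And>k. k \<noteq> i \<Longrightarrow> h k = 0"
  have "sum h UNIV = sum (\<lambda>k. if k = i then h i else 0) (UNIV::3 set)"
    by (rule sum.cong) (auto simp: a)
  then show ?thesis by simp
qed

lemma dm_diag: "diag_metric f i i = (\<lambda>y. 1 / (f i y)^2)"
  by (rule ext) (simp add: diag_metric_def)

lemma dm_off: "i \<noteq> j \<Longrightarrow> diag_metric f i j = (\<lambda>y. 0)"
  by (rule ext) (simp add: diag_metric_def)

lemma ff_eq: "frame_field f V i = (\<lambda>y. V i y * f i y)"
  by (rule ext) (simp add: frame_field_def)

lemma pd_zero: "pd k (\<lambda>y. 0) x = 0"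
  unfolding pd_def by simp

lemma dep_mult: "depends_only_on k F \<Longrightarrow> depends_only_on k G \<Longrightarrow> depends_only_on k (\<lambda>y. F y * G y)"
  unfolding depends_only_on_def by metis

lemma dep_invsq: "depends_only_on k F \<Longrightarrow> depends_only_on k (\<lambda>y. 1 / (F y)^2)"
  unfolding depends_only_on_def by metis

lemma diag_lie:
  assumes fs: "smooth3 (f i)" and nz: "\<And>y. f i y \<noteq> 0" and vs: "smooth3 (V i)"
    and dep: "depends_only_on i (f i)"
  shows "lie_metric (diag_metric f) (frame_field f V) i i x = 2 * pd i (V i) x / f i x"
proof -
  have S1: "(\<Sum>k\<in>UNIV. frame_field f V k x * pd k (diag_metric f i i) x)
       = frame_field f V i x * pd i (diag_metric f i i) x"
    by (rule sum_single) (simp add: dm_diag pd_other[OF dep_invsq[OF dep]])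
  have S2: "(\<Sum>k\<in>UNIV. diag_metric f k i x * pd i (frame_field f V k) x)
       = 1 / (f i x)^2 * pd i (frame_field f V i) x"
    by (subst sum_single[of i]) (auto simp: diag_metric_def)
  have S3: "(\<Sum>k\<in>UNIV. diag_metric f i k x * pd i (frame_field f V k) x)
       = 1 / (f i x)^2 * pd i (frame_field f V i) x"
    by (subst sum_single[of i]) (auto simp: diag_metric_def)
  have P: "pd i (frame_field f V i) x = pd i (V i) x * f i x + V i x * pd i (f i) x"
    unfolding ff_eq by (rule pd_mult[OF vs fs])
  have Q: "pd i (diag_metric f i i) x = - 2 * pd i (f i) x / (f i x)^3"
    unfolding dm_diag by (rule pd_invsq[OF fs nz])
  show ?thesis
    unfolding lie_metric_def S1 S2 S3 P Q
    using nz[of x] by (simp add: frame_field_def field_simps power2_eq_square power3_eq_cube)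
qed

lemma off_lie:
  assumes "i \<noteq> j"
  shows "lie_metric (diag_metric f) W i j x = 1 / (f j x)^2 * pd i (W j) x + 1 / (f i x)^2 * pd j (W i) x"
proof -
  have S1: "(\<Sum>k\<in>UNIV. W k x * pd k (diag_metric f i j) x) = 0"
    using assms by (simp add: dm_off pd_zero)
  have S2: "(\<Sum>k\<in>UNIV. diag_metric f k j x * pd i (W k) x) = 1 / (f j x)^2 * pd i (W j) x"
    by (subst sum_single[of j]) (auto simp: diag_metric_def)
  have S3: "(\<Sum>k\<in>UNIV. diag_metric f i k x * pd j (W k) x) = 1 / (f i x)^2 * pd j (W i) x"
    by (subst sum_single[of i]) (auto simp: diag_metric_def)
  show ?thesis unfolding lie_metric_def S1 S2 S3 by simp
qed

lemma diag_const:
  assumes fs: "smooth3 (f i)" and nz: "\<And>y. f i y \<noteq> 0" and vs: "smooth3 (V i)"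
    and dep: "depends_only_on i (f i)" and depv: "depends_only_on i (V i)"
    and K: "killing (diag_metric f) (frame_field f V)"
  shows "V i x = V i 0"
proof (rule const_zero[OF depv line_diff[OF vs]])
  fix y
  have "2 * pd i (V i) y / f i y = 0"
    using K diag_lie[of f i V y, OF fs nz vs dep] unfolding killing_def by metis
  then show "pd i (V i) y = 0" using nz[of y] by simp
qed

lemma off_const:
  assumes fs: "smooth3 (f j)" "smooth3 (f 1)" and nz: "\<And>i y. f i y \<noteq> 0" and vs: "smooth3 (V j)"
    and dep: "\<And>i. depends_only_on 1 (f i)" and depv: "\<And>i. depends_only_on 1 (V i)"
    and K: "killing (diag_metric f) (frame_field f V)" and j: "j \<noteq> 1"
  shows "V j x = (V j 0 * f j 0) / f j x"
proof -
  have "(\<lambda>y. V j y * f j y) x = (\<lambda>y. V j y * f j y) 0"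
  proof (rule const_zero[OF dep_mult[OF depv dep]])
    fix y
    show "(\<lambda>t. V j (y + t *\<^sub>R axis 1 1) * f j (y + t *\<^sub>R axis 1 1)) differentiable at 0"
      using line_diff[OF vs] line_diff[OF fs(1)] by (rule differentiable_mult)
    have z: "pd j (frame_field f V 1) y = 0"
      unfolding ff_eq by (rule pd_other[OF dep_mult[OF depv dep] j])
    have "1 / (f j y)^2 * pd 1 (frame_field f V j) y = 0"
    proof -
      have "lie_metric (diag_metric f) (frame_field f V) 1 j y = 0" using K unfolding killing_def by blast
      then show ?thesis using off_lie[of 1 j f "frame_field f V" y] j z by simp
    qed
    then show "pd 1 (\<lambda>y. V j y * f j y) y = 0" using nz[of j y] by (simp add: ff_eq)
  qed
  then show ?thesis using nz[of j x] by (simp add: field_simps)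
qed

theorem mainTheorem9:
  fixes f V1 V2 :: "3 \<Rightarrow> real^3 \<Rightarrow> real"
  assumes f_smooth: "\<And>i. smooth3 (f i)"
    and f_nz: "\<And>i x. f i x \<noteq> 0"
    and V1_smooth: "\<And>i. smooth3 (V1 i)"
    and V2_smooth: "\<And>i. smooth3 (V2 i)"
  shows
   "(((\<forall>i. depends_only_on 1 (f i) \<and> depends_only_on 1 (V1 i) \<and> depends_only_on 1 (V2 i))
      \<and> killing (diag_metric f) (frame_field f V1) \<and> killing (diag_metric f) (frame_field f V2))
     \<longrightarrow> (\<exists>c2 c3 ct1 ct2 ct3 :: real. \<forall>x.
            V1 1 x = V2 1 x + ct1
          \<and> V1 2 x = V2 2 x + ct2 + c2 / f 2 x
          \<and> V1 3 x = V2 3 x + ct3 + c3 / f 3 x))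
  \<and> (((\<forall>i. depends_only_on i (f i) \<and> depends_only_on i (V1 i) \<and> depends_only_on i (V2 i))
      \<and> killing (diag_metric f) (frame_field f V1) \<and> killing (diag_metric f) (frame_field f V2))
     \<longrightarrow> (\<exists>c :: 3 \<Rightarrow> real. \<forall>i x. V1 i x = V2 i x + c i))"
proof (intro conjI impI)
  assume H: "(\<forall>i. depends_only_on 1 (f i) \<and> depends_only_on 1 (V1 i) \<and> depends_only_on 1 (V2 i))
      \<and> killing (diag_metric f) (frame_field f V1) \<and> killing (diag_metric f) (frame_field f V2)"
  have d1: "\<And>i. depends_only_on 1 (f i)" using H by blast
  have dv1: "\<And>i. depends_only_on 1 (V1 i)" using H by blast
  have dv2: "\<And>i. depends_only_on 1 (V2 i)" using H by blast
  have K1: "killing (diag_metric f) (frame_field f V1)" using H by blast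
  have K2: "killing (diag_metric f) (frame_field f V2)" using H by blast
  have n2: "(2::3) \<noteq> 1" and n3: "(3::3) \<noteq> 1" by simp_all
  have a1: "V1 1 x = V1 1 0" for x
    using diag_const[of f 1 V1 x, OF f_smooth f_nz V1_smooth d1 dv1 K1] .
  have b1: "V2 1 x = V2 1 0" for x
    using diag_const[of f 1 V2 x, OF f_smooth f_nz V2_smooth d1 dv2 K2] .
  have a2: "V1 2 x = (V1 2 0 * f 2 0) / f 2 x" for x
    using off_const[of f 2 V1 x, OF f_smooth f_smooth f_nz V1_smooth d1 dv1 K1 n2] .
  have b2: "V2 2 x = (V2 2 0 * f 2 0) / f 2 x" for x
    using off_const[of f 2 V2 x, OF f_smooth f_smooth f_nz V2_smooth d1 dv2 K2 n2] .
  have a3: "V1 3 x = (V1 3 0 * f 3 0) / f 3 x" for x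
    using off_const[of f 3 V1 x, OF f_smooth f_smooth f_nz V1_smooth d1 dv1 K1 n3] .
  have b3: "V2 3 x = (V2 3 0 * f 3 0) / f 3 x" for x
    using off_const[of f 3 V2 x, OF f_smooth f_smooth f_nz V2_smooth d1 dv2 K2 n3] .
  have E: "\<forall>x. V1 1 x = V2 1 x + (V1 1 0 - V2 1 0)
          \<and> V1 2 x = V2 2 x + 0 + (V1 2 0 * f 2 0 - V2 2 0 * f 2 0) / f 2 x
          \<and> V1 3 x = V2 3 x + 0 + (V1 3 0 * f 3 0 - V2 3 0 * f 3 0) / f 3 x"
  proof
    fix x
    have e1: "V1 1 x = V2 1 x + (V1 1 0 - V2 1 0)" using a1[of x] b1[of x] by simp
    have e2: "V1 2 x = V2 2 x + 0 + (V1 2 0 * f 2 0 - V2 2 0 * f 2 0) / f 2 x"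
      unfolding a2[of x] b2[of x] by (simp add: diff_divide_distrib)
    have e3: "V1 3 x = V2 3 x + 0 + (V1 3 0 * f 3 0 - V2 3 0 * f 3 0) / f 3 x"
      unfolding a3[of x] b3[of x] by (simp add: diff_divide_distrib)
    show "V1 1 x = V2 1 x + (V1 1 0 - V2 1 0)
          \<and> V1 2 x = V2 2 x + 0 + (V1 2 0 * f 2 0 - V2 2 0 * f 2 0) / f 2 x
          \<and> V1 3 x = V2 3 x + 0 + (V1 3 0 * f 3 0 - V2 3 0 * f 3 0) / f 3 x"
      using e1 e2 e3 by (intro conjI)
  qed
  show "\<exists>c2 c3 ct1 ct2 ct3 :: real. \<forall>x.
            V1 1 x = V2 1 x + ct1
          \<and> V1 2 x = V2 2 x + ct2 + c2 / f 2 x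
          \<and> V1 3 x = V2 3 x + ct3 + c3 / f 3 x"
    by (rule exI[of _ "V1 2 0 * f 2 0 - V2 2 0 * f 2 0"], rule exI[of _ "V1 3 0 * f 3 0 - V2 3 0 * f 3 0"],
        rule exI[of _ "V1 1 0 - V2 1 0"], rule exI[of _ 0], rule exI[of _ 0], rule E)
next
  assume H: "(\<forall>i. depends_only_on i (f i) \<and> depends_only_on i (V1 i) \<and> depends_only_on i (V2 i))
      \<and> killing (diag_metric f) (frame_field f V1) \<and> killing (diag_metric f) (frame_field f V2)"
  have K1: "killing (diag_metric f) (frame_field f V1)"
    and K2: "killing (diag_metric f) (frame_field f V2)" using H by auto
  show "\<exists>c :: 3 \<Rightarrow> real. \<forall>i x. V1 i x = V2 i x + c i"
  proof (rule exI[of _ "\<lambda>i. V1 i 0 - V2 i 0"], intro allI)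
    fix i x
    have di: "depends_only_on i (f i)" and dv1: "depends_only_on i (V1 i)"
      and dv2: "depends_only_on i (V2 i)" using H by blast+
    have a: "V1 i x = V1 i 0"
      using diag_const[of f i V1 x, OF f_smooth f_nz V1_smooth di dv1 K1] .
    have b: "V2 i x = V2 i 0"
      using diag_const[of f i V2 x, OF f_smooth f_nz V2_smooth di dv2 K2] .
    show "V1 i x = V2 i x + (V1 i 0 - V2 i 0)" using a b by simp
  qed
qed

end
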